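(* Let $\ell$ be a finite linear order with $|\ell|\ge 2$, and let $\mathscr T$ be a Schröder tree on $\ell$ enriched with connected graphs (every $g_v$ connected), with root $r$ and $g=\bigvee\mathscr T$. Then $$\sigma(L(g))=\Big(\prod_{w\in\mathrm{Iv}(\mathscr T),\,w\neq r}\varphi_{N_{rw}}\big(\sigma(\mathscr L(g_w))\big)\Big)\cdot\sigma(\mathscr L(g_r)).$$
   Context: All graphs are finite and simple; $L(g)$ is the Laplacian matrix. Spectra are multisets written multiplicatively (product = multiset union). Segmented partitions and generalized composition: for a finite linear order $\ell$, a segmented partition is a tuple $\pi=(\ell_1,\dots,\ell_k)$ of nonempty consecutive segments whose concatenation is $\ell$; given graphs $g_{\ell_j}$ on $\ell_j$ and a graph $h$ on vertex set $\pi$, $\bigvee_h(g_{\ell_1},\dots,g_{\ell_k})$ is the graph on $\ell$ whose edges are those of the $g_{\ell_j}$ together with all $\{x,y\}$, $x\in\ell_i$, $y\in\ell_j$, for $\{\ell_i,\ell_j\}\in E(h)$. Graph-enriched Schröder trees: a rooted plane tree whose leaves, read left to right, are the elements of $\ell$, each internal vertex having at least two children, together with for each internal vertex $v$ a simple graph $g_v$ on vertex set $\pi_v=(\ell_{v_1},\dots,\ell_{v_k})$, where $v_1,\dots,v_k$ are the children of $v$ left to right and $\ell_u$ is the set of leaves descending from $u$ ($\ell_u=\{u\}$ for a leaf). $\mathrm{Iv}(\mathscr T)$ is the set of internal vertices; $\mathscr T_u$ the subtree rooted at $u$; $\bigvee\mathscr T$ is defined recursively ($\bigvee$ of a single leaf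 is the one-vertex graph, otherwise $\bigvee\mathscr T=\bigvee_{g_r}(\bigvee\mathscr T_{r_1},\dots,\bigvee\mathscr T_{r_k})$). The matrix $\mathscr L(g_v)$: with $n_i=|\ell_{v_i}|$ and $N_i=\sum_{s:\{\ell_{v_s},\ell_{v_i}\}\in E(g_v)}n_s$, it is the $k\times k$ matrix with diagonal entries $N_i$ and $(i,j)$ entry ($i\ne j$) equal to $-\sqrt{n_in_j}$ if $\{\ell_{v_i},\ell_{v_j}\}\in E(g_v)$ and $0$ otherwise. External valencies: for a non-root internal vertex $w$ with parent $u$, $N_w=\sum_{x:\{\ell_x,\ell_w\}\in E(g_u)}|\ell_x|$; if $r=w_0,w_1,\dots,w_m=w$ is the path from the root to $w$, then $N_{rw}=N_{w_1}+\cdots+N_{w_m}$. The shift operator: for a finite multiset $\omega$ of reals and $s\in\mathbb R$, $\varphi_s(\omega)$ is obtained by removing one occurrence of $0$ from $\omega$ if $0\in\omega$ (and removing nothing otherwise), and then adding $s$ to every remaining element. *)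

theory Defs
  imports "Jordan_Normal_Form.Char_Poly" "HOL-Library.Multiset"
begin

definition simple_graph :: "nat \<Rightarrow> nat set set \<Rightarrow> bool" where
  "simple_graph n E \<longleftrightarrow> (\<forall>e\<in>E. \<exists>x y. e = {x, y} \<and> x \<noteq> y \<and> x < n \<and> y < n)"

definition graph_connected :: "nat \<Rightarrow> nat set set \<Rightarrow> bool" where
  "graph_connected n E \<longleftrightarrow>
     (\<forall>i<n. \<forall>j<n. (\<lambda>x y. {x, y} \<in> E)\<^sup>*\<^sup>* i j)"

definition degree :: "nat set set \<Rightarrow> nat \<Rightarrow> nat" where
  "degree E x = card {y. {x, y} \<in> E \<and> y \<noteq> x}"

definition laplacian :: "nat \<Rightarrow> nat set set \<Rightarrow> real mat" where
  "laplacian n E = mat n n (\<lambda>(i, j).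
      if i = j then real (degree E i) else if {i, j} \<in> E then -1 else 0)"

definition spec :: "real mat \<Rightarrow> real multiset" where
  "spec A = proots (char_poly A)"

text \<open>A node carries the list of its children (left to right) and a graph on the
  children, whose vertices are the child indices 0..<k.  The leaves, read left to right,
  are the elements of the linear order {0..<n}.\<close>
datatype stree = Leaf | Node "stree list" "nat set set"

lemma stree_size_child: "b \<in> set ts \<Longrightarrow> size b < Suc (size_list size ts)"
  by (induct ts) auto

lemma stree_size_zip: "(a, b) \<in> set (zip xs ts) \<Longrightarrow> size b < Suc (size_list size ts)"
  by (auto dest: set_zip_rightD intro: stree_size_child)

fun nleaves :: "stree \<Rightarrow> nat" where
  "nleaves Leaf = 1"
| "nleaves (Node ts g) = sum_list (map nleaves ts)"

fun wf_stree :: "stree \<Rightarrow> bool" where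
  "wf_stree Leaf = True"
| "wf_stree (Node ts g) \<longleftrightarrow> length ts \<ge> 2 \<and> simple_graph (length ts) g \<and> (\<forall>t\<in>set ts. wf_stree t)"

fun conn_stree :: "stree \<Rightarrow> bool" where
  "conn_stree Leaf = True"
| "conn_stree (Node ts g) \<longleftrightarrow> graph_connected (length ts) g \<and> (\<forall>t\<in>set ts. conn_stree t)"

definition offset :: "stree list \<Rightarrow> nat \<Rightarrow> nat" where
  "offset ts i = sum_list (map nleaves (take i ts))"

definition block :: "stree list \<Rightarrow> nat \<Rightarrow> nat set" where
  "block ts i = {offset ts i ..< offset ts i + nleaves (ts ! i)}"

function (sequential) compose :: "stree \<Rightarrow> nat set set" where
  "compose Leaf = {}"
| "compose (Node ts g) =
     (\<Union>(i, t)\<in>set (zip [0..<length ts] ts). ((`) ((+) (offset ts i))) ` compose t)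
     \<union> {{x, y} | x y i j. {i, j} \<in> g \<and> i < length ts \<and> j < length ts \<and> x \<in> block ts i \<and> y \<in> block ts j}"

  by pat_completeness auto
termination by (relation "measure size") (auto intro: stree_size_zip)

fun subtree :: "stree \<Rightarrow> nat list \<Rightarrow> stree" where
  "subtree t [] = t"
| "subtree Leaf (i # p) = Leaf"
| "subtree (Node ts g) (i # p) = (if i < length ts then subtree (ts ! i) p else Leaf)"

function (sequential) positions :: "stree \<Rightarrow> nat list set" where
  "positions Leaf = {[]}"
| "positions (Node ts g) = insert [] (\<Union>(i, t)\<in>set (zip [0..<length ts] ts). (#) i ` positions t)"

  by pat_completeness auto
termination by (relation "measure (\<lambda>t. size t)") (auto intro: stree_size_zip)

fun is_node :: "stree \<Rightarrow> bool" where
  "is_node Leaf = False"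
| "is_node (Node ts g) = True"

definition internal_vertices :: "stree \<Rightarrow> nat list set" where
  "internal_vertices T = {p \<in> positions T. is_node (subtree T p)}"

fun children :: "stree \<Rightarrow> stree list" where
  "children Leaf = []"
| "children (Node ts g) = ts"

fun node_graph :: "stree \<Rightarrow> nat set set" where
  "node_graph Leaf = {}"
| "node_graph (Node ts g) = g"

definition Lmat :: "stree \<Rightarrow> real mat" where
  "Lmat v = (let ts = children v; g = node_graph v; k = length ts;
              n = (\<lambda>i. real (nleaves (ts ! i)));
              N = (\<lambda>i. \<Sum>s\<in>{s. s < k \<and> {s, i} \<in> g}. n s)
     in mat k k (\<lambda>(i, j). if i = j then N i
                          else if {i, j} \<in> g then - sqrt (n i * n j) else 0))"

definition ext_val :: "stree \<Rightarrow> nat \<Rightarrow> real" where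
  "ext_val u i = (let ts = children u; g = node_graph u in
     \<Sum>x\<in>{x. x < length ts \<and> {x, i} \<in> g}. real (nleaves (ts ! x)))"

text \<open>N_{rw} for the vertex at position p: sum of the external valencies along the path
  from the root (excluded) to w (included).\<close>
definition N_path :: "stree \<Rightarrow> nat list \<Rightarrow> real" where
  "N_path T p = (\<Sum>m<length p. ext_val (subtree T (take m p)) (p ! m))"

definition shift_op :: "real \<Rightarrow> real multiset \<Rightarrow> real multiset" where
  "shift_op s \<omega> = image_mset (\<lambda>x. x + s) (\<omega> - {#0#})"

end

theory Submission
  imports Defs
begin

definition detI :: "'a set \<Rightarrow> ('a \<Rightarrow> 'a \<Rightarrow> real) \<Rightarrow> real" where
  "detI I f = (\<Sum>p | p permutes I. of_int (sign p) * (\<Prod>i\<in>I. f i (p i)))"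

lemma detI_cong:
  assumes "\<And>a b. a \<in> I \<Longrightarrow> b \<in> I \<Longrightarrow> f a b = g a b"
  shows "detI I f = detI I g"
  unfolding detI_def
proof (rule sum.cong[OF refl])
  fix p assume "p \<in> {p. p permutes I}"
  hence "p i \<in> I" if "i \<in> I" for i using that by (simp add: permutes_in_image)
  thus "of_int (sign p) * (\<Prod>i\<in>I. f i (p i)) = of_int (sign p) * (\<Prod>i\<in>I. g i (p i))"
    using assms by (metis (no_types, lifting) prod.cong)
qed

lemma detI_mat: assumes "A \<in> carrier_mat n n"
  shows "det A = detI {0..<n} (\<lambda>i j. A $$ (i, j))"
  unfolding det_def'[OF assms] detI_def by (simp add: atLeast0LessThan)

lemma bij_map_permutation:
  assumes h: "bij_betw h J I"
  shows "bij_betw (map_permutation J h) {p. p permutes J} {q. q permutes I}"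
proof (rule bij_betw_byWitness[where f' = "map_permutation I (inv_into J h)"])
  show "\<forall>a\<in>{p. p permutes J}. map_permutation I (inv_into J h) (map_permutation J h a) = a"
    using map_permutation_compose_inv[OF h] h by (auto simp: bij_betw_inv_into_left)
  have h': "bij_betw (inv_into J h) I J" using h by (rule bij_betw_inv_into)
  have "map_permutation J (inv_into I (inv_into J h)) (map_permutation I (inv_into J h) b) = b"
    if "b permutes I" for b
    by (rule map_permutation_compose_inv[OF h' that])
       (metis bij_betw_def h' inv_into_f_f)
  moreover have "map_permutation J (inv_into I (inv_into J h)) q = map_permutation J h q"
    if "q permutes J" for q
  proof (rule map_permutation_cong[OF _ that refl])
    show "inj_on (inv_into I (inv_into J h)) J"
      using h' by (metis bij_betw_imp_inj_on bij_betw_inv_into)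
    show "inv_into I (inv_into J h) x = h x" if "x \<in> J" for x
      using h that by (simp add: bij_betw_imp_inj_on bij_betw_imp_surj_on inv_into_inv_into_eq)
  qed simp
  ultimately show "\<forall>b\<in>{q. q permutes I}. map_permutation J h (map_permutation I (inv_into J h) b) = b"
    using map_permutation_permutes[OF h'] by auto
  show "map_permutation J h ` {p. p permutes J} \<subseteq> {q. q permutes I}"
    using map_permutation_permutes[OF h] by auto
  show "map_permutation I (inv_into J h) ` {q. q permutes I} \<subseteq> {p. p permutes J}"
    using map_permutation_permutes[OF h'] by auto
qed

lemma detI_reindex:
  assumes h: "bij_betw h J I" and fin: "finite J"
  shows "detI I f = detI J (\<lambda>a b. f (h a) (h b))"
proof -
  let ?mp = "map_permutation J h"
  have inj: "inj_on h J" using h by (rule bij_betw_imp_inj_on)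
  have "detI J (\<lambda>a b. f (h a) (h b)) =
      (\<Sum>p | p permutes J. of_int (sign (?mp p)) * (\<Prod>i\<in>I. f i (?mp p i)))"
    unfolding detI_def
  proof (rule sum.cong[OF refl])
    fix p assume "p \<in> {p. p permutes J}"
    hence p: "p permutes J" by simp
    have "(\<Prod>i\<in>I. f i (?mp p i)) = (\<Prod>a\<in>J. f (h a) (?mp p (h a)))"
      by (rule prod.reindex_bij_betw[OF h, symmetric])
    also have "\<dots> = (\<Prod>a\<in>J. f (h a) (h (p a)))"
      by (rule prod.cong[OF refl]) (simp add: map_permutation_apply[OF inj])
    finally show "of_int (sign p) * (\<Prod>a\<in>J. f (h a) (h (p a))) =
        of_int (sign (?mp p)) * (\<Prod>i\<in>I. f i (?mp p i))"
      using sign_map_permutation[OF inj p fin] by simp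
  qed
  also have "\<dots> = detI I f"
    unfolding detI_def
    by (rule sum.reindex_bij_betw[OF bij_map_permutation[OF h]])
  finally show ?thesis by simp
qed

lemma detI_mult:
  assumes fin: "finite I"
  shows "detI I (\<lambda>x z. \<Sum>y\<in>I. f x y * g y z) = detI I f * detI I g"
proof -
  obtain h where h: "bij_betw h {0..<card I} I" using ex_bij_betw_nat_finite[OF fin] by blast
  define n where "n = card I"
  define F where "F = mat n n (\<lambda>(a,b). f (h a) (h b))"
  define G where "G = mat n n (\<lambda>(a,b). g (h a) (h b))"
  have FG: "F \<in> carrier_mat n n" "G \<in> carrier_mat n n" unfolding F_def G_def by auto
  have h': "bij_betw h {0..<n} I" using h n_def by simp
  have 1: "detI I f = det F" unfolding detI_mat[OF FG(1)] detI_reindex[OF h' finite_atLeastLessThan]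
    by (rule detI_cong) (auto simp: F_def)
  have 2: "detI I g = det G" unfolding detI_mat[OF FG(2)] detI_reindex[OF h' finite_atLeastLessThan]
    by (rule detI_cong) (auto simp: G_def)
  have 3: "detI I (\<lambda>x z. \<Sum>y\<in>I. f x y * g y z) = det (F * G)"
    unfolding detI_mat[OF mult_carrier_mat[OF FG]] detI_reindex[OF h' finite_atLeastLessThan]
  proof (rule detI_cong)
    fix a b assume ab: "a \<in> {0..<n}" "b \<in> {0..<n}"
    have "(F * G) $$ (a, b) = (\<Sum>c\<in>{0..<n}. f (h a) (h c) * g (h c) (h b))"
      using ab FG by (simp add: F_def G_def scalar_prod_def)
    also have "\<dots> = (\<Sum>y\<in>I. f (h a) y * g y (h b))"
      by (rule sum.reindex_bij_betw[OF h'])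
    finally show "(\<Sum>y\<in>I. f (h a) y * g y (h b)) = (F * G) $$ (a, b)" by simp
  qed
  show ?thesis unfolding 1 2 3 by (rule det_mult[OF FG])
qed

lemma detI_id:
  assumes fin: "finite I"
  shows "detI I (\<lambda>x y. if x = y then 1 else 0) = 1"
proof -
  obtain h where h: "bij_betw h {0..<card I} I" using ex_bij_betw_nat_finite[OF fin] by blast
  have inj: "inj_on h {0..<card I}" using h by (rule bij_betw_imp_inj_on)
  have "detI I (\<lambda>x y. if x = y then 1 else 0) = det (1\<^sub>m (card I) :: real mat)"
    unfolding detI_mat[OF one_carrier_mat] detI_reindex[OF h finite_atLeastLessThan]
    by (rule detI_cong) (use inj in \<open>auto simp: inj_on_def\<close>)
  thus ?thesis by simp
qed

lemma bij_shift_back: "bij_betw (\<lambda>a. a - s) {s..<s+m} {0..<(m::nat)}"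
  by (rule bij_betw_byWitness[where f'="\<lambda>a. a + s"]) auto

lemma detI_triangular:
  assumes fin: "finite I" and S: "S \<subseteq> I"
    and z: "\<And>x y. x \<in> I - S \<Longrightarrow> y \<in> S \<Longrightarrow> f x y = 0"
  shows "detI I f = detI S f * detI (I - S) f"
proof -
  define s where "s = card S"
  define m where "m = card (I - S)"
  have finS: "finite S" using fin S finite_subset by blast
  have finIS: "finite (I - S)" using fin by simp
  obtain h1 where h1: "bij_betw h1 {0..<s} S" using ex_bij_betw_nat_finite[OF finS] s_def by blast
  obtain h2 where h2: "bij_betw h2 {0..<m} (I - S)" using ex_bij_betw_nat_finite[OF finIS] m_def by blast
  define h where "h a = (if a < s then h1 a else h2 (a - s))" for a
  have hb1: "bij_betw h {0..<s} S" using h1 by (rule bij_betw_cong[THEN iffD1, rotated]) (auto simp: h_def)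
  have "bij_betw (h2 \<circ> (\<lambda>a. a - s)) {s..<s+m} (I - S)"
    by (rule bij_betw_trans[OF bij_shift_back h2])
  hence hb2: "bij_betw h {s..<s+m} (I - S)"
    by (rule bij_betw_cong[THEN iffD1, rotated]) (auto simp: h_def)
  have "bij_betw h ({0..<s} \<union> {s..<s+m}) (S \<union> (I - S))"
    by (rule bij_betw_combine[OF hb1 hb2]) auto
  moreover have "{0..<s} \<union> {s..<s+m} = {0..<s+m}" by auto
  moreover have "S \<union> (I - S) = I" using S by auto
  ultimately have hb: "bij_betw h {0..<s+m} I" by simp
  define A1 where "A1 = mat s s (\<lambda>(a,b). f (h1 a) (h1 b))"
  define A2 where "A2 = mat s m (\<lambda>(a,b). f (h1 a) (h2 b))"
  define A4 where "A4 = mat m m (\<lambda>(a,b). f (h2 a) (h2 b))"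
  define M where "M = mat (s+m) (s+m) (\<lambda>(a,b). f (h a) (h b))"
  have c: "A1 \<in> carrier_mat s s" "A2 \<in> carrier_mat s m" "A4 \<in> carrier_mat m m"
    "M \<in> carrier_mat (s+m) (s+m)"
    unfolding A1_def A2_def A4_def M_def by auto
  have M: "M = four_block_mat A1 A2 (0\<^sub>m m s) A4"
  proof (rule eq_matI)
    fix i j assume ij: "i < dim_row (four_block_mat A1 A2 (0\<^sub>m m s) A4)"
      "j < dim_col (four_block_mat A1 A2 (0\<^sub>m m s) A4)"
    hence ij': "i < s + m" "j < s + m" using c by auto
    show "M $$ (i, j) = four_block_mat A1 A2 (0\<^sub>m m s) A4 $$ (i, j)"
    proof (cases "i < s")
      case True thus ?thesis using ij' c by (auto simp: four_block_mat_def A1_def A2_def M_def h_def)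
    next
      case False
      have "h2 (i - s) \<in> I - S" using h2 ij' False by (auto dest: bij_betwE)
      moreover have "h1 j \<in> S" if "j < s" using h1 that by (auto dest: bij_betwE)
      ultimately show ?thesis using ij' c False z
        by (auto simp: four_block_mat_def A4_def M_def h_def)
    qed
  qed (use c in \<open>auto simp: M_def\<close>)
  have "detI I f = det M"
    unfolding detI_mat[OF c(4)] detI_reindex[OF hb finite_atLeastLessThan]
    by (rule detI_cong) (auto simp: M_def)
  also have "\<dots> = det A1 * det A4"
    unfolding M by (rule det_four_block_mat_lower_left_zero[OF c(1,2) refl c(3)])
  also have "det A1 = detI S f"
    unfolding detI_mat[OF c(1)] detI_reindex[OF h1 finite_atLeastLessThan]
    by (rule detI_cong) (auto simp: A1_def)
  also have "det A4 = detI (I - S) f"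
    unfolding detI_mat[OF c(3)] detI_reindex[OF h2 finite_atLeastLessThan]
    by (rule detI_cong) (auto simp: A4_def)
  finally show ?thesis .
qed

lemma detI_empty: "detI {} f = 1"
  unfolding detI_def by (simp add: permutes_empty)

lemma detI_blockdiag:
  assumes "finite K" and "\<And>k. k \<in> K \<Longrightarrow> finite (B k)"
    and "\<And>k k'. k \<in> K \<Longrightarrow> k' \<in> K \<Longrightarrow> k \<noteq> k' \<Longrightarrow> B k \<inter> B k' = {}"
    and "\<And>k k' x y. k \<in> K \<Longrightarrow> k' \<in> K \<Longrightarrow> k \<noteq> k' \<Longrightarrow> x \<in> B k \<Longrightarrow> y \<in> B k' \<Longrightarrow> f x y = 0"
  shows "detI (\<Union>k\<in>K. B k) f = (\<Prod>k\<in>K. detI (B k) f)"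
  using assms
proof (induction K rule: finite_induct)
  case empty
  then show ?case by (simp add: detI_empty)
next
  case (insert k K)
  let ?U = "\<Union>k\<in>K. B k"
  have eq: "(\<Union>k\<in>insert k K. B k) = B k \<union> ?U" by auto
  have "detI (B k \<union> ?U) f = detI (B k) f * detI ((B k \<union> ?U) - B k) f"
  proof (rule detI_triangular)
    show "finite (B k \<union> ?U)" using insert by auto
    show "f x y = 0" if "x \<in> B k \<union> ?U - B k" "y \<in> B k" for x y
    proof -
      from that obtain k' where "k' \<in> K" "x \<in> B k'" by auto
      thus ?thesis using insert.prems(2)[of k' k] insert.prems(3)[of k' k x y] that insert.hyps by auto
    qed
  qed auto
  moreover have "(B k \<union> ?U) - B k = ?U" using insert.prems(2) insert.hyps by auto
  moreover have "detI ?U f = (\<Prod>k\<in>K. detI (B k) f)"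
    by (rule insert.IH) (use insert.prems in blast)+
  ultimately show ?case using insert.hyps eq by simp
qed

lemma detI_scale:
  assumes fin: "finite I" and s: "\<And>i. i \<in> I \<Longrightarrow> s i \<noteq> 0"
  shows "detI I (\<lambda>i j. f i j * s j / s i) = detI I f"
  unfolding detI_def
proof (rule sum.cong[OF refl])
  fix p assume "p \<in> {p. p permutes I}"
  hence p: "p permutes I" by simp
  have "(\<Prod>i\<in>I. f i (p i) * s (p i) / s i) = (\<Prod>i\<in>I. f i (p i)) * (\<Prod>i\<in>I. s (p i)) / (\<Prod>i\<in>I. s i)"
    by (simp add: prod.distrib prod_dividef)
  also have "(\<Prod>i\<in>I. s (p i)) = (\<Prod>i\<in>I. s i)"
    using prod.permute[OF p, of s] by (simp add: comp_def)
  also have "(\<Prod>i\<in>I. f i (p i)) * (\<Prod>i\<in>I. s i) / (\<Prod>i\<in>I. s i) = (\<Prod>i\<in>I. f i (p i))"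
    using s fin by (simp add: prod_zero_iff)
  finally show "of_int (sign p) * (\<Prod>i\<in>I. f i (p i) * s (p i) / s i) = of_int (sign p) * (\<Prod>i\<in>I. f i (p i))"
    by simp
qed

lemma detI_join_general:
  fixes I :: "'a set" and K :: "'k set" and blk :: "'a \<Rightarrow> 'k" and fs :: "'k \<Rightarrow> 'a"
    and M :: "'a \<Rightarrow> 'a \<Rightarrow> real" and a :: "'k \<Rightarrow> 'k \<Rightarrow> real"
  assumes fin: "finite I" and finK: "finite K"
    and blkK: "\<And>x. x \<in> I \<Longrightarrow> blk x \<in> K"
    and fsI: "\<And>k. k \<in> K \<Longrightarrow> fs k \<in> I"
    and blkfs: "\<And>k. k \<in> K \<Longrightarrow> blk (fs k) = k"
    and P1: "\<And>x j. x \<in> I \<Longrightarrow> j \<in> K \<Longrightarrow> (\<Sum>y\<in>{y\<in>I. blk y = j}. M x y) = a (blk x) j"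
    and P2: "\<And>x y. x \<in> I \<Longrightarrow> y \<in> I \<Longrightarrow> blk x \<noteq> blk y \<Longrightarrow> M x y = M (fs (blk x)) y"
  shows "detI I M = detI K a *
    (\<Prod>k\<in>K. detI ({x\<in>I. blk x = k} - {fs k}) (\<lambda>x y. M x y - M (fs k) y))"
proof -
  define F where "F = fs ` K"
  have inF: "x \<in> F \<longleftrightarrow> x = fs (blk x)" if "x \<in> I" for x
    using that blkK blkfs unfolding F_def by force
  have FI: "F \<subseteq> I" using fsI F_def by auto
  define P where "P z y = (if y \<in> F then (if blk z = blk y then 1 else 0) else (if z = y then 1 else 0 :: real))" for z y
  define Pi where "Pi x z = (if x = z then 1 else 0) - (if x \<notin> F \<and> z = fs (blk x) then 1 else 0 :: real)" for x z
  define MP where "MP z y = (\<Sum>w\<in>I. M z w * P w y)" for z y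
  define Q where "Q x y = (\<Sum>z\<in>I. Pi x z * MP z y)" for x y
  have sumPi: "(\<Sum>z\<in>I. Pi x z * g z) = g x - (if x \<notin> F then g (fs (blk x)) else 0)"
    if "x \<in> I" for x g
  proof -
    have "(\<Sum>z\<in>I. Pi x z * g z) = (\<Sum>z\<in>I. (if x = z then g z else 0)) - (\<Sum>z\<in>I. (if x \<notin> F \<and> z = fs (blk x) then g z else 0))"
    proof -
      have "Pi x z * g z = (if x = z then g z else 0) - (if x \<notin> F \<and> z = fs (blk x) then g z else 0)" for z
        by (simp add: Pi_def)
      thus ?thesis by (simp add: sum_subtractf)
    qed
    also have "\<dots> = g x - (if x \<notin> F then g (fs (blk x)) else 0)"
      using that fsI blkK fin by (auto simp: sum.delta sum.delta')
    finally show ?thesis .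
  qed
  have 1: "detI I Pi * detI I P = 1"
  proof -
    have "detI I Pi * detI I P = detI I (\<lambda>x y. \<Sum>z\<in>I. Pi x z * P z y)"
      by (rule detI_mult[OF fin, symmetric])
    also have "\<dots> = detI I (\<lambda>x y. if x = y then 1 else 0)"
    proof (rule detI_cong)
      fix x y assume xy: "x \<in> I" "y \<in> I"
      show "(\<Sum>z\<in>I. Pi x z * P z y) = (if x = y then 1 else 0)"
        unfolding sumPi[OF xy(1)] using xy inF fsI blkK blkfs
        by (auto simp: P_def)
    qed
    finally show ?thesis using detI_id[OF fin] by simp
  qed
  have 2: "detI I Q = detI I M"
  proof -
    have "detI I Q = detI I Pi * detI I MP"
      unfolding Q_def by (rule detI_mult[OF fin])
    also have "detI I MP = detI I M * detI I P"
      unfolding MP_def by (rule detI_mult[OF fin])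
    finally show ?thesis using 1 by (simp add: algebra_simps)
  qed
  have MP1: "MP z y = a (blk z) (blk y)" if "z \<in> I" "y \<in> F" for z y
  proof -
    have "MP z y = (\<Sum>w\<in>I. if blk w = blk y then M z w else 0)"
      unfolding MP_def using that by (intro sum.cong) (auto simp: P_def)
    also have "\<dots> = (\<Sum>w\<in>{w\<in>I. blk w = blk y}. M z w)"
      using fin by (simp add: sum.inter_filter)
    also have "\<dots> = a (blk z) (blk y)" using P1 that blkK FI by auto
    finally show ?thesis .
  qed
  have MP2: "MP z y = M z y" if "z \<in> I" "y \<in> I" "y \<notin> F" for z y
  proof -
    have "MP z y = (\<Sum>w\<in>I. if w = y then M z w else 0)"
      unfolding MP_def using that by (intro sum.cong) (auto simp: P_def)
    thus ?thesis using that fin by (simp add: sum.delta')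
  qed
  have Qd: "Q x y = MP x y - (if x \<notin> F then MP (fs (blk x)) y else 0)" if "x \<in> I" for x y
    unfolding Q_def by (rule sumPi[OF that])
  have "detI I Q = detI F Q * detI (I - F) Q"
  proof (rule detI_triangular[OF fin FI])
    fix x y assume "x \<in> I - F" "y \<in> F"
    thus "Q x y = 0" using Qd MP1 fsI blkK blkfs FI by auto
  qed
  also have "detI F Q = detI K a"
  proof -
    have bij: "bij_betw fs K F" unfolding F_def
      by (rule inj_on_imp_bij_betw) (metis blkfs inj_onI)
    have "detI F Q = detI K (\<lambda>i j. Q (fs i) (fs j))" by (rule detI_reindex[OF bij finK])
    also have "\<dots> = detI K a"
      by (rule detI_cong) (use Qd MP1 fsI blkfs F_def in auto)
    finally show ?thesis .
  qed
  also have "detI (I - F) Q = (\<Prod>k\<in>K. detI ({x\<in>I. blk x = k} - {fs k}) (\<lambda>x y. M x y - M (fs k) y))"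
  proof -
    define B where "B k = {x\<in>I. blk x = k} - {fs k}" for k
    have U: "I - F = (\<Union>k\<in>K. B k)" unfolding B_def using inF blkK by auto
    have Qb: "Q x y = M x y - M (fs (blk x)) y" if "x \<in> I - F" "y \<in> I - F" for x y
      using that Qd MP2 fsI blkK by auto
    have "detI (I - F) Q = (\<Prod>k\<in>K. detI (B k) Q)"
      unfolding U
    proof (rule detI_blockdiag[OF finK])
      show "finite (B k)" for k using fin B_def by auto
      show "B k \<inter> B k' = {}" if "k \<noteq> k'" for k k' using that B_def by auto
      fix k k' x y assume "k \<in> K" "k' \<in> K" "k \<noteq> k'" "x \<in> B k" "y \<in> B k'"
      moreover hence "x \<in> I - F" "y \<in> I - F" using U by auto
      ultimately show "Q x y = 0" using Qb P2 B_def by auto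
    qed
    also have "\<dots> = (\<Prod>k\<in>K. detI (B k) (\<lambda>x y. M x y - M (fs k) y))"
    proof (rule prod.cong[OF refl], rule detI_cong)
      fix k x y assume "k \<in> K" "x \<in> B k" "y \<in> B k"
      moreover hence "x \<in> I - F" "y \<in> I - F" using U by auto
      ultimately show "Q x y = M x y - M (fs k) y" using Qb B_def by auto
    qed
    finally show ?thesis unfolding B_def .
  qed
  finally show ?thesis using 2 by simp
qed

definition off :: "nat list \<Rightarrow> nat \<Rightarrow> nat" where "off ns i = sum_list (take i ns)"
definition bk :: "nat list \<Rightarrow> nat \<Rightarrow> nat" where "bk ns a = (LEAST i. a < off ns (Suc i))"

lemma off_0[simp]: "off ns 0 = 0" by (simp add: off_def)

lemma off_Suc: "i < length ns \<Longrightarrow> off ns (Suc i) = off ns i + ns ! i"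
  by (simp add: off_def take_Suc_conv_app_nth)

lemma off_mono: "i \<le> j \<Longrightarrow> off ns i \<le> off ns j"
proof -
  assume "i \<le> j"
  then obtain d where "j = i + d" using le_Suc_ex by blast
  thus ?thesis by (simp add: off_def take_add)
qed

lemma off_len: "length ns \<le> i \<Longrightarrow> off ns i = sum_list ns"
  by (simp add: off_def)

lemma bk_eq:
  assumes "off ns i \<le> a" "a < off ns (Suc i)"
  shows "bk ns a = i"
  unfolding bk_def
proof (rule Least_equality)
  show "a < off ns (Suc i)" by fact
  fix j assume "a < off ns (Suc j)"
  show "i \<le> j"
  proof (rule ccontr)
    assume "\<not> i \<le> j"
    hence "off ns (Suc j) \<le> off ns i" by (intro off_mono) auto
    thus False using assms \<open>a < off ns (Suc j)\<close> by auto
  qed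
qed

lemma bk_prop:
  assumes "a < sum_list ns"
  shows "bk ns a < length ns" "off ns (bk ns a) \<le> a" "a < off ns (Suc (bk ns a))"
proof -
  have ex: "a < off ns (Suc (length ns - 1))"
  proof -
    have "length ns \<noteq> 0" using assms by auto
    thus ?thesis using assms off_len[of ns "Suc (length ns - 1)"] by simp
  qed
  show 3: "a < off ns (Suc (bk ns a))" unfolding bk_def by (rule LeastI[where P="\<lambda>i. a < off ns (Suc i)", OF ex])
  have "bk ns a \<le> length ns - 1" unfolding bk_def by (rule Least_le[where P="\<lambda>i. a < off ns (Suc i)", OF ex])
  moreover have "length ns \<noteq> 0" using assms by auto
  ultimately show "bk ns a < length ns" by (cases "length ns") auto
  show "off ns (bk ns a) \<le> a"
  proof (cases "bk ns a")
    case 0 thus ?thesis by simp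
  next
    case (Suc j)
    have "\<not> a < off ns (Suc j)"
    proof
      assume "a < off ns (Suc j)"
      hence "bk ns a \<le> j" unfolding bk_def by (rule Least_le)
      thus False using Suc by simp
    qed
    thus ?thesis using Suc by simp
  qed
qed

lemma off_lt_total: "i < length ns \<Longrightarrow> 0 < ns ! i \<Longrightarrow> off ns i < sum_list ns"
proof -
  assume "i < length ns" "0 < ns ! i"
  hence "off ns i < off ns (Suc i)" by (simp add: off_Suc)
  also have "\<dots> \<le> off ns (length ns)" using \<open>i < length ns\<close> by (intro off_mono) auto
  finally show ?thesis by (simp add: off_len)
qed

lemma block_set:
  assumes "j < length ns"
  shows "{y\<in>{0..<sum_list ns}. bk ns y = j} = {off ns j..<off ns j + ns ! j}"
proof -
  have le: "off ns (Suc j) \<le> sum_list ns"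
    using off_mono[of "Suc j" "length ns" ns] assms by (simp add: off_len)
  have 1: "off ns j \<le> y \<and> y < off ns j + ns ! j" if "y < sum_list ns" "bk ns y = j" for y
    using bk_prop[of y ns] assms that by (auto simp: off_Suc)
  have 2: "y < sum_list ns \<and> bk ns y = j" if "off ns j \<le> y" "y < off ns j + ns ! j" for y
    using bk_eq[of ns j y] assms le that by (auto simp: off_Suc)
  show ?thesis unfolding set_eq_iff mem_Collect_eq atLeastLessThan_iff using 1 2 by blast
qed

lemma sum_block: "(\<Sum>y\<in>{c..<c + m}. f y) = (\<Sum>b<m. f (c + b :: nat))"
proof -
  have "(\<Sum>y\<in>{c..<c + m}. f y) = (\<Sum>y\<in>{0 + c..<m + c}. f y)" by (simp add: add.commute)
  also have "\<dots> = (\<Sum>b\<in>{0..<m}. f (b + c))" by (rule sum.shift_bounds_nat_ivl)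
  finally show ?thesis by (simp add: atLeast0LessThan add.commute)
qed

lemma detI_join:
  fixes ns :: "nat list" and C :: "nat \<Rightarrow> nat \<Rightarrow> nat \<Rightarrow> real" and Nv :: "nat \<Rightarrow> real"
    and adj :: "nat \<Rightarrow> nat \<Rightarrow> bool" and LT :: "nat \<Rightarrow> nat \<Rightarrow> real" and x :: real
  assumes pos: "\<And>i. i < length ns \<Longrightarrow> 0 < ns ! i"
    and rs: "\<And>i a. i < length ns \<Longrightarrow> a < ns ! i \<Longrightarrow> (\<Sum>b<ns ! i. C i a b) = 0"
    and LT: "\<And>a b. a < sum_list ns \<Longrightarrow> b < sum_list ns \<Longrightarrow> LT a b =
      (if bk ns a = bk ns b then C (bk ns a) (a - off ns (bk ns a)) (b - off ns (bk ns a))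
          + (if a = b then Nv (bk ns a) else 0)
       else if adj (bk ns a) (bk ns b) then -1 else 0)"
  shows "detI {0..<sum_list ns} (\<lambda>a b. (if a = b then x else 0) - LT a b) =
    detI {0..<length ns} (\<lambda>i j. if i = j then x - Nv i else if adj i j then real (ns ! j) else 0) *
    (\<Prod>i<length ns. detI {1..<ns ! i} (\<lambda>a b. (if a = b then x - Nv i else 0) - (C i a b - C i 0 b)))"
proof -
  define M where "M a b = (if a = b then x else 0) - LT a b" for a b
  define A where "A i j = (if i = j then x - Nv i else if adj i j then real (ns ! j) else 0)" for i j
  let ?I = "{0..<sum_list ns}" and ?K = "{0..<length ns}"
  have bkoff: "bk ns (off ns i + b) = i" if "i < length ns" "b < ns ! i" for i b
    using that by (intro bk_eq) (auto simp: off_Suc)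
  have G: "detI ?I M = detI ?K A *
    (\<Prod>k\<in>?K. detI ({y\<in>?I. bk ns y = k} - {off ns k}) (\<lambda>a b. M a b - M (off ns k) b))"
  proof (rule detI_join_general)
    show "bk ns y \<in> ?K" if "y \<in> ?I" for y using bk_prop(1)[of y ns] that by auto
    show "off ns k \<in> ?I" if "k \<in> ?K" for k using off_lt_total[of k ns] pos that by auto
    show "bk ns (off ns k) = k" if "k \<in> ?K" for k using bkoff[of k 0] pos that by auto
  next
    fix y j assume y: "y \<in> ?I" and j: "j \<in> ?K"
    define i where "i = bk ns y"
    have i: "i < length ns" "off ns i \<le> y" "y < off ns i + ns ! i"
      using bk_prop[of y ns] y i_def by (auto simp: off_Suc)
    have "(\<Sum>z\<in>{z\<in>?I. bk ns z = j}. M y z) = (\<Sum>b<ns ! j. M y (off ns j + b))"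
      unfolding block_set[of j ns, simplified atLeastLessThan_iff[symmetric]] sum_block
      using j block_set[of j ns] by (simp add: sum_block)
    also have "\<dots> = A i j"
    proof (cases "j = i")
      case True
      have "(\<Sum>b<ns ! j. M y (off ns j + b)) = (\<Sum>b<ns ! i. M y (off ns i + b))"
        using True by simp
      also have "\<dots> =
          (\<Sum>b<ns ! i. (if b = y - off ns i then x - Nv i else 0) - C i (y - off ns i) b)"
      proof (rule sum.cong[OF refl])
        fix b assume "b \<in> {..<ns ! i}"
        hence b: "b < ns ! i" by simp
        have "off ns i + b < sum_list ns" using off_mono[of "Suc i" "length ns" ns] i b
          by (auto simp: off_Suc off_len)
        thus "M y (off ns i + b) = (if b = y - off ns i then x - Nv i else 0) - C i (y - off ns i) b"
          unfolding M_def using LT[of y "off ns i + b"] y i b bkoff[of i b] True i_def by auto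
      qed
      also have "\<dots> = (x - Nv i) - (\<Sum>b<ns ! i. C i (y - off ns i) b)"
        using i by (auto simp: sum_subtractf)
      also have "\<dots> = x - Nv i" using rs[of i "y - off ns i"] i by simp
      finally show ?thesis using True by (simp add: A_def)
    next
      case False
      have "(\<Sum>b<ns ! j. M y (off ns j + b)) = (\<Sum>b<ns ! j. if adj i j then 1 else 0)"
      proof (rule sum.cong[OF refl])
        fix b assume "b \<in> {..<ns ! j}"
        hence b: "b < ns ! j" by simp
        have "off ns j + b < sum_list ns" using off_mono[of "Suc j" "length ns" ns] j b
          by (auto simp: off_Suc off_len)
        moreover have "y \<noteq> off ns j + b" using bkoff[of j b] j b False i_def by auto
        ultimately show "M y (off ns j + b) = (if adj i j then 1 else 0)"
          unfolding M_def using LT[of y "off ns j + b"] y j b bkoff[of j b] False i_def by auto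
      qed
      thus ?thesis using False by (simp add: A_def)
    qed
    finally show "(\<Sum>z\<in>{z\<in>?I. bk ns z = j}. M y z) = A (bk ns y) j" unfolding i_def .
  next
    fix y z assume yz: "y \<in> ?I" "z \<in> ?I" "bk ns y \<noteq> bk ns z"
    have o: "off ns (bk ns y) \<in> ?I" "bk ns (off ns (bk ns y)) = bk ns y"
      using off_lt_total[of "bk ns y" ns] bkoff[of "bk ns y" 0] pos bk_prop(1)[of y ns] yz by auto
    show "M y z = M (off ns (bk ns y)) z"
      unfolding M_def using LT[of y z] LT[of "off ns (bk ns y)" z] yz o by auto
  qed auto
  also have "(\<Prod>k\<in>?K. detI ({y\<in>?I. bk ns y = k} - {off ns k}) (\<lambda>a b. M a b - M (off ns k) b)) =
     (\<Prod>i<length ns. detI {1..<ns ! i} (\<lambda>a b. (if a = b then x - Nv i else 0) - (C i a b - C i 0 b)))"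
    unfolding atLeast0LessThan[symmetric]
  proof (rule prod.cong[OF refl])
    fix i assume "i \<in> {0..<length ns}"
    hence i: "i < length ns" by simp
    have le: "off ns i + ns ! i \<le> sum_list ns" using off_mono[of "Suc i" "length ns" ns] i
      by (auto simp: off_Suc off_len)
    have set: "{y\<in>?I. bk ns y = i} - {off ns i} = (\<lambda>a. off ns i + a) ` {1..<ns ! i}"
    proof -
      have "{y\<in>?I. bk ns y = i} - {off ns i} = {off ns i + 1..<off ns i + ns ! i}"
        unfolding block_set[OF i] by auto
      also have "\<dots> = (\<lambda>a. off ns i + a) ` {1..<ns ! i}"
        using image_add_atLeastLessThan[of "off ns i" 1 "ns ! i"] by (simp add: add.commute)
      finally show ?thesis .
    qed
    have bij: "bij_betw (\<lambda>a. off ns i + a) {1..<ns ! i} ({y\<in>?I. bk ns y = i} - {off ns i})"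
      unfolding set by (rule inj_on_imp_bij_betw) (auto simp: inj_on_def)
    show "detI ({y\<in>?I. bk ns y = i} - {off ns i}) (\<lambda>a b. M a b - M (off ns i) b) =
      detI {1..<ns ! i} (\<lambda>a b. (if a = b then x - Nv i else 0) - (C i a b - C i 0 b))"
      unfolding detI_reindex[OF bij finite_atLeastLessThan]
    proof (rule detI_cong)
      fix a b assume ab: "a \<in> {1..<ns ! i}" "b \<in> {1..<ns ! i}"
      have lt: "off ns i + a < sum_list ns" "off ns i + b < sum_list ns" "off ns i < sum_list ns"
        using ab le by auto
      have bks: "bk ns (off ns i + a) = i" "bk ns (off ns i + b) = i" "bk ns (off ns i) = i"
        using bkoff[of i a] bkoff[of i b] bkoff[of i 0] ab i pos by auto
      show "M (off ns i + a) (off ns i + b) - M (off ns i) (off ns i + b) =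
          (if a = b then x - Nv i else 0) - (C i a b - C i 0 b)"
        unfolding M_def using LT[OF lt(1) lt(2)] LT[OF lt(3) lt(2)] bks ab by auto
    qed
  qed
  finally show ?thesis unfolding M_def A_def .
qed

lemma nleaves_pos: "wf_stree t \<Longrightarrow> 0 < nleaves t"
proof (induction t)
  case Leaf thus ?case by simp
next
  case (Node ts g)
  then obtain t where "t \<in> set ts" using Node.prems by (cases ts) auto
  hence "0 < nleaves t" using Node by auto
  moreover have "nleaves t \<le> sum_list (map nleaves ts)"
    using \<open>t \<in> set ts\<close> by (simp add: member_le_sum_list)
  ultimately show ?case by simp
qed

lemma offset_off: "offset ts i = off (map nleaves ts) i"
  by (simp add: offset_def off_def take_map)

lemma block_off: "block ts i = {off (map nleaves ts) i..<off (map nleaves ts) i + nleaves (ts ! i)}"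
  by (simp add: block_def offset_off)

lemma in_zip_upt: "(i, t) \<in> set (zip [0..<length ts] ts) \<longleftrightarrow> i < length ts \<and> t = ts ! i"
  by (auto simp: in_set_zip intro!: exI[where x=i])

lemma zip_upt_set: "set (zip [0..<length ts] ts) = (\<lambda>i. (i, ts ! i)) ` {..<length ts}"
proof -
  have "p \<in> set (zip [0..<length ts] ts) \<longleftrightarrow> p \<in> (\<lambda>i. (i, ts ! i)) ` {..<length ts}" for p
    by (cases p) (auto simp: in_zip_upt)
  thus ?thesis by blast
qed

lemma bk_block:
  assumes "i < length ts" "y \<in> block ts i"
  shows "bk (map nleaves ts) y = i"
  using assms by (intro bk_eq) (auto simp: block_off off_Suc)

lemma compose_Node_iff:
  "e \<in> compose (Node ts g) \<longleftrightarrow>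
    (\<exists>i<length ts. e \<in> (`) ((+) (offset ts i)) ` compose (ts ! i)) \<or>
    (\<exists>x y i j. e = {x, y} \<and> {i, j} \<in> g \<and> i < length ts \<and> j < length ts \<and> x \<in> block ts i \<and> y \<in> block ts j)"
  unfolding compose.simps zip_upt_set by blast

lemma simple_compose: "wf_stree t \<Longrightarrow> simple_graph (nleaves t) (compose t)"
proof (induction t)
  case Leaf thus ?case by (simp add: simple_graph_def)
next
  case (Node ts g)
  let ?ns = "map nleaves ts"
  have g: "simple_graph (length ts) g" using Node.prems by simp
  show ?case unfolding simple_graph_def
  proof
    fix e assume "e \<in> compose (Node ts g)"
    then consider (a) i where "i < length ts" "e \<in> (`) ((+) (offset ts i)) ` compose (ts ! i)"
      | (b) x y i j where "e = {x, y}" "{i, j} \<in> g" "i < length ts" "j < length ts" "x \<in> block ts i" "y \<in> block ts j"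
      unfolding compose_Node_iff by blast
    thus "\<exists>x y. e = {x, y} \<and> x \<noteq> y \<and> x < nleaves (Node ts g) \<and> y < nleaves (Node ts g)"
    proof cases
      case a
      then obtain e' where e': "e' \<in> compose (ts ! i)" "e = (+) (offset ts i) ` e'" by auto
      have "simple_graph (nleaves (ts ! i)) (compose (ts ! i))"
        using Node a by auto
      then obtain c d where cd: "e' = {c, d}" "c \<noteq> d" "c < nleaves (ts ! i)" "d < nleaves (ts ! i)"
        using e'(1) unfolding simple_graph_def by blast
      have le: "off ?ns i + ?ns ! i \<le> sum_list ?ns"
        using off_mono[of "Suc i" "length ?ns" ?ns] a by (simp add: off_Suc off_len)
      show ?thesis
        by (rule exI[of _ "offset ts i + c"], rule exI[of _ "offset ts i + d"])
           (use cd e' le a in \<open>auto simp: offset_off\<close>)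
    next
      case b
      have "i \<noteq> j" using b g unfolding simple_graph_def by (metis doubleton_eq_iff)
      hence "x \<noteq> y" using bk_block[of i ts x] bk_block[of j ts y] b by auto
      moreover have "x < sum_list ?ns" "y < sum_list ?ns"
        using b off_mono[of "Suc i" "length ?ns" ?ns] off_mono[of "Suc j" "length ?ns" ?ns]
        by (auto simp: off_Suc off_len block_off)
      ultimately show ?thesis using b by auto
    qed
  qed
qed

lemma edge_char:
  assumes wf: "wf_stree (Node ts g)" and ab: "a < sum_list (map nleaves ts)" "b < sum_list (map nleaves ts)" "a \<noteq> b"
  defines "ns \<equiv> map nleaves ts"
  shows "{a, b} \<in> compose (Node ts g) \<longleftrightarrow>
    (if bk ns a = bk ns b then {a - off ns (bk ns a), b - off ns (bk ns a)} \<in> compose (ts ! bk ns a)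
     else {bk ns a, bk ns b} \<in> g)"
proof -
  have g: "simple_graph (length ts) g" using wf by simp
  have pa: "bk ns a < length ts" "off ns (bk ns a) \<le> a" "a < off ns (bk ns a) + ns ! bk ns a"
    using bk_prop[of a ns] ab unfolding ns_def by (auto simp: off_Suc)
  have pb: "bk ns b < length ts" "off ns (bk ns b) \<le> b" "b < off ns (bk ns b) + ns ! bk ns b"
    using bk_prop[of b ns] ab unfolding ns_def by (auto simp: off_Suc)
  show ?thesis
  proof
    assume "{a, b} \<in> compose (Node ts g)"
    then consider (a) i where "i < length ts" "{a, b} \<in> (`) ((+) (offset ts i)) ` compose (ts ! i)"
      | (b) x y i j where "{a, b} = {x, y}" "{i, j} \<in> g" "i < length ts" "j < length ts" "x \<in> block ts i" "y \<in> block ts j"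
      unfolding compose_Node_iff by blast
    thus "(if bk ns a = bk ns b then {a - off ns (bk ns a), b - off ns (bk ns a)} \<in> compose (ts ! bk ns a)
     else {bk ns a, bk ns b} \<in> g)"
    proof cases
      case a
      then obtain e' where e': "e' \<in> compose (ts ! i)" "{a, b} = (+) (offset ts i) ` e'" by auto
      have "simple_graph (nleaves (ts ! i)) (compose (ts ! i))"
        using wf a by (intro simple_compose) auto
      then obtain c d where cd: "e' = {c, d}" "c \<noteq> d" "c < nleaves (ts ! i)" "d < nleaves (ts ! i)"
        using e'(1) unfolding simple_graph_def by blast
      have ab': "{a, b} = {offset ts i + c, offset ts i + d}" using e' cd by auto
      have inb: "offset ts i + c \<in> block ts i" "offset ts i + d \<in> block ts i"
        using cd by (auto simp: block_def)
      have "bk ns a = i \<and> bk ns b = i"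
        using ab' bk_block[OF a(1) inb(1)] bk_block[OF a(1) inb(2)] unfolding ns_def
        by (auto simp: doubleton_eq_iff)
      moreover have "{a - off ns i, b - off ns i} = {c, d}"
        using ab' unfolding ns_def offset_off by (auto simp: doubleton_eq_iff)
      ultimately show ?thesis using e' cd by auto
    next
      case b
      have "i \<noteq> j" using b g unfolding simple_graph_def by (metis doubleton_eq_iff)
      moreover have "bk ns x = i" "bk ns y = j" using bk_block b unfolding ns_def by auto
      ultimately show ?thesis using b(1,2) by (auto simp: doubleton_eq_iff insert_commute)
    qed
  next
    assume R: "(if bk ns a = bk ns b then {a - off ns (bk ns a), b - off ns (bk ns a)} \<in> compose (ts ! bk ns a)
     else {bk ns a, bk ns b} \<in> g)"
    show "{a, b} \<in> compose (Node ts g)"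
    proof (cases "bk ns a = bk ns b")
      case True
      let ?i = "bk ns a"
      have eq: "{a, b} = (+) (offset ts ?i) ` {a - off ns ?i, b - off ns ?i}"
        using pa pb True unfolding offset_off ns_def by auto
      have "{a - off ns ?i, b - off ns ?i} \<in> compose (ts ! ?i)" using R True by simp
      hence "{a, b} \<in> (`) ((+) (offset ts ?i)) ` compose (ts ! ?i)" using eq by blast
      thus ?thesis using pa(1) unfolding compose_Node_iff by blast
    next
      case False
      have "a \<in> block ts (bk ns a)" "b \<in> block ts (bk ns b)"
        using pa pb unfolding block_off ns_def by auto
      moreover have "{bk ns a, bk ns b} \<in> g" using R False by simp
      ultimately show ?thesis unfolding compose_Node_iff
        by (intro disjI2 exI[of _ a] exI[of _ b] exI[of _ "bk ns a"] exI[of _ "bk ns b"])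
           (use pa(1) pb(1) in simp)
    qed
  qed
qed

lemma sum_blocks:
  "(\<Sum>y<sum_list ns. h y) = (\<Sum>j<length ns. \<Sum>b<ns ! j. h (off ns j + b))"
proof -
  have "(\<Sum>y<sum_list ns. h y) = (\<Sum>j<length ns. \<Sum>y\<in>{y. y \<in> {..<sum_list ns} \<and> bk ns y = j}. h y)"
    by (rule sum.group[symmetric]) (use bk_prop(1) in auto)
  also have "\<dots> = (\<Sum>j<length ns. \<Sum>b<ns ! j. h (off ns j + b))"
  proof (rule sum.cong[OF refl])
    fix j assume "j \<in> {..<length ns}"
    hence "{y. y \<in> {..<sum_list ns} \<and> bk ns y = j} = {off ns j..<off ns j + ns ! j}"
      using block_set[of j ns] by auto
    thus "(\<Sum>y\<in>{y. y \<in> {..<sum_list ns} \<and> bk ns y = j}. h y) = (\<Sum>b<ns ! j. h (off ns j + b))"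
      by (simp add: sum_block)
  qed
  finally show ?thesis .
qed

lemma deg_sum:
  assumes "simple_graph n E"
  shows "real (degree E a) = (\<Sum>y<n. if y \<noteq> a \<and> {a, y} \<in> E then 1 else 0)"
proof -
  have "{y. {a, y} \<in> E \<and> y \<noteq> a} = {y\<in>{..<n}. y \<noteq> a \<and> {a, y} \<in> E}"
  proof -
    have "y < n" if "{a, y} \<in> E" for y
      using assms that unfolding simple_graph_def by (metis doubleton_eq_iff)
    thus ?thesis by auto
  qed
  hence "real (degree E a) = (\<Sum>y\<in>{y\<in>{..<n}. y \<noteq> a \<and> {a, y} \<in> E}. 1)"
    unfolding degree_def real_of_card by simp
  also have "\<dots> = (\<Sum>y<n. if y \<noteq> a \<and> {a, y} \<in> E then 1 else 0)"
    by (rule sum.inter_filter) simp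
  finally show ?thesis .
qed

lemma lap_entry:
  "a < n \<Longrightarrow> b < n \<Longrightarrow> laplacian n E $$ (a, b) =
    (if a = b then real (degree E a) else if {a, b} \<in> E then -1 else 0)"
  by (simp add: laplacian_def)

lemma lap_rowsum:
  assumes "simple_graph n E" "a < n"
  shows "(\<Sum>b<n. laplacian n E $$ (a, b)) = 0"
proof -
  have "(\<Sum>b<n. laplacian n E $$ (a, b)) =
      (\<Sum>b<n. (if b = a then real (degree E a) else 0) - (if b \<noteq> a \<and> {a, b} \<in> E then 1 else 0))"
    by (rule sum.cong[OF refl]) (use assms(2) in \<open>auto simp: lap_entry\<close>)
  also have "\<dots> = 0" using assms by (simp add: sum_subtractf deg_sum)
  finally show ?thesis .
qed

lemma lap_node:
  assumes wf: "wf_stree (Node ts g)"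
    and ab: "a < sum_list (map nleaves ts)" "b < sum_list (map nleaves ts)"
  defines "ns \<equiv> map nleaves ts"
  shows "laplacian (sum_list ns) (compose (Node ts g)) $$ (a, b) =
    (if bk ns a = bk ns b then
       laplacian (ns ! bk ns a) (compose (ts ! bk ns a)) $$ (a - off ns (bk ns a), b - off ns (bk ns a))
       + (if a = b then ext_val (Node ts g) (bk ns a) else 0)
     else if {bk ns a, bk ns b} \<in> g then -1 else 0)"
proof -
  let ?E = "compose (Node ts g)"
  define i where "i = bk ns a"
  have g: "simple_graph (length ts) g" using wf by simp
  have pa: "i < length ts" "off ns i \<le> a" "a < off ns i + ns ! i"
    using bk_prop[of a ns] ab unfolding ns_def i_def by (auto simp: off_Suc)
  have pb: "bk ns b < length ts" "off ns (bk ns b) \<le> b" "b < off ns (bk ns b) + ns ! bk ns b"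
    using bk_prop[of b ns] ab unfolding ns_def by (auto simp: off_Suc)
  have sT: "simple_graph (sum_list ns) ?E" using simple_compose[OF wf] unfolding ns_def by simp
  have sc: "simple_graph (ns ! i) (compose (ts ! i))"
    using simple_compose[of "ts ! i"] wf pa unfolding ns_def by auto
  show ?thesis
  proof (cases "a = b")
    case False
    show ?thesis
      unfolding lap_entry[OF ab[folded ns_def]] using edge_char[OF wf ab False] False pa pb
      by (auto simp: lap_entry ns_def i_def)
  next
    case True
    define c0 where "c0 = a - off ns i"
    have c0: "c0 < ns ! i" using pa c0_def by auto
    define f where "f y = (if y \<noteq> a \<and> {a, y} \<in> ?E then 1 else 0 :: real)" for y
    have "real (degree ?E a) = (\<Sum>y<sum_list ns. f y)" unfolding f_def by (rule deg_sum[OF sT])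
    also have "\<dots> = (\<Sum>j<length ns. \<Sum>b<ns ! j. f (off ns j + b))" by (rule sum_blocks)
    also have "\<dots> = (\<Sum>j<length ns. (if j = i then real (degree (compose (ts ! i)) c0) else 0)
        + (if {j, i} \<in> g then real (ns ! j) else 0))"
    proof (rule sum.cong[OF refl])
      fix j assume "j \<in> {..<length ns}"
      hence j: "j < length ns" by simp
      have bkj: "bk ns (off ns j + b) = j" if "b < ns ! j" for b
        using that j by (intro bk_eq) (auto simp: off_Suc)
      have ltj: "off ns j + b < sum_list ns" if "b < ns ! j" for b
        using that j off_mono[of "Suc j" "length ns" ns] by (auto simp: off_Suc off_len)
      show "(\<Sum>b<ns ! j. f (off ns j + b)) = (if j = i then real (degree (compose (ts ! i)) c0) else 0)
        + (if {j, i} \<in> g then real (ns ! j) else 0)"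
      proof (cases "j = i")
        case True
        have "{i, i} \<notin> g" using g unfolding simple_graph_def by (metis doubleton_eq_iff)
        have "(\<Sum>b<ns ! j. f (off ns j + b)) = (\<Sum>b<ns ! i. if b \<noteq> c0 \<and> {c0, b} \<in> compose (ts ! i) then 1 else 0)"
        proof (rule sum.cong)
          fix b assume "b \<in> {..<ns ! i}"
          hence b: "b < ns ! i" by simp
          show "f (off ns j + b) = (if b \<noteq> c0 \<and> {c0, b} \<in> compose (ts ! i) then 1 else 0)"
          proof (cases "off ns i + b = a")
            case True thus ?thesis using c0_def f_def \<open>j = i\<close> by auto
          next
            case False
            have "{a, off ns i + b} \<in> ?E \<longleftrightarrow> {c0, b} \<in> compose (ts ! i)"
              using edge_char[OF wf ab(1), of "off ns i + b"] False ltj[of b] bkj[of b] b \<open>j = i\<close>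
              unfolding ns_def[symmetric] i_def[symmetric] c0_def by auto
            moreover have "b \<noteq> c0" using False c0_def pa by auto
            ultimately show ?thesis using False f_def \<open>j = i\<close> by auto
          qed
        qed (use True in simp)
        also have "\<dots> = real (degree (compose (ts ! i)) c0)" by (rule deg_sum[OF sc, symmetric])
        finally show ?thesis using True \<open>{i, i} \<notin> g\<close> by simp
      next
        case False
        have "(\<Sum>b<ns ! j. f (off ns j + b)) = (\<Sum>b<ns ! j. if {j, i} \<in> g then 1 else 0)"
        proof (rule sum.cong[OF refl])
          fix b assume "b \<in> {..<ns ! j}"
          hence b: "b < ns ! j" by simp
          have "off ns j + b \<noteq> a" using bkj[OF b] False i_def by auto
          moreover have "{a, off ns j + b} \<in> ?E \<longleftrightarrow> {j, i} \<in> g"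
            using edge_char[OF wf ab(1), of "off ns j + b"] ltj[OF b] bkj[OF b] False calculation
            unfolding ns_def[symmetric] i_def[symmetric] by (auto simp: insert_commute)
          ultimately show "f (off ns j + b) = (if {j, i} \<in> g then 1 else 0)" using f_def by auto
        qed
        thus ?thesis using False by simp
      qed
    qed
    also have "\<dots> = real (degree (compose (ts ! i)) c0) + ext_val (Node ts g) i"
    proof -
      have "ext_val (Node ts g) i = (\<Sum>x\<in>{x\<in>{..<length ts}. {x, i} \<in> g}. real (nleaves (ts ! x)))"
        unfolding ext_val_def by simp
      also have "\<dots> = (\<Sum>j<length ts. if {j, i} \<in> g then real (nleaves (ts ! j)) else 0)"
        by (rule sum.inter_filter) simp
      also have "\<dots> = (\<Sum>j<length ns. if {j, i} \<in> g then real (ns ! j) else 0)"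
        unfolding ns_def by (intro sum.cong) auto
      finally have "ext_val (Node ts g) i = (\<Sum>j<length ns. if {j, i} \<in> g then real (ns ! j) else 0)" .
      moreover have "i < length ns" using pa ns_def by simp
      ultimately show ?thesis by (simp add: sum.distrib)
    qed
    finally have deg: "real (degree ?E a) = real (degree (compose (ts ! i)) c0) + ext_val (Node ts g) i" .
    have L: "laplacian (sum_list ns) ?E $$ (a, b) = real (degree (compose (ts ! i)) c0) + ext_val (Node ts g) i"
      using lap_entry[OF ab[folded ns_def], of ?E] True deg by (simp del: compose.simps)
    have R: "laplacian (ns ! i) (compose (ts ! i)) $$ (c0, c0) = real (degree (compose (ts ! i)) c0)"
      using lap_entry[OF c0 c0] by (simp del: compose.simps)
    show ?thesis unfolding L unfolding True[symmetric] i_def[symmetric] c0_def[symmetric]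
      using R by (simp del: compose.simps)
  qed
qed

definition Lap :: "stree \<Rightarrow> real mat" where
  "Lap t = laplacian (nleaves t) (compose t)"

definition Dp :: "stree \<Rightarrow> real mat" where
  "Dp t = mat (nleaves t - 1) (nleaves t - 1) (\<lambda>(a, b). Lap t $$ (a + 1, b + 1) - Lap t $$ (0, b + 1))"

lemma Lap_carrier: "Lap t \<in> carrier_mat (nleaves t) (nleaves t)"
  by (simp add: Lap_def laplacian_def)

lemma Dp_carrier: "Dp t \<in> carrier_mat (nleaves t - 1) (nleaves t - 1)"
  by (simp add: Dp_def)

lemma poly_char_detI:
  assumes "A \<in> carrier_mat n n"
  shows "poly (char_poly A) x = detI {0..<n} (\<lambda>a b. (if a = b then x else 0) - A $$ (a, b))"
proof -
  have c: "- char_matrix A x \<in> carrier_mat n n" using assms by simp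
  show ?thesis
    unfolding char_poly_matrix[OF assms] detI_mat[OF c]
    by (rule detI_cong) (use assms in \<open>auto simp: char_matrix_def\<close>)
qed

lemma detI_sing: "detI {a} f = f a a"
  unfolding detI_def by simp

lemma detI_shift1:
  "detI {1..<n} f = detI {0..<n - 1} (\<lambda>a b. f (Suc a) (Suc b))"
proof (rule detI_reindex)
  show "bij_betw Suc {0..<n - 1} {1..<n}"
    by (rule bij_betw_byWitness[where f'="\<lambda>a. a - 1"]) auto
qed simp

lemma poly_Dp:
  "poly (char_poly (Dp t)) y =
    detI {1..<nleaves t} (\<lambda>a b. (if a = b then y else 0) - (Lap t $$ (a, b) - Lap t $$ (0, b)))"
  unfolding poly_char_detI[OF Dp_carrier] detI_shift1
  by (rule detI_cong) (auto simp: Dp_def)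

lemma rowsum_Lap: "wf_stree t \<Longrightarrow> a < nleaves t \<Longrightarrow> (\<Sum>b<nleaves t. Lap t $$ (a, b)) = 0"
  unfolding Lap_def by (rule lap_rowsum[OF simple_compose])

lemma single_block:
  assumes wf: "wf_stree t"
  shows "poly (char_poly (Lap t)) x = x * poly (char_poly (Dp t)) x"
proof -
  define m where "m = nleaves t"
  have m: "0 < m" using nleaves_pos[OF wf] m_def by simp
  have bk0: "bk [m] a = 0" if "a < m" for a using that by (intro bk_eq) (auto simp: off_def)
  have "detI {0..<sum_list [m]} (\<lambda>a b. (if a = b then x else 0) - Lap t $$ (a, b)) =
    detI {0..<length [m]} (\<lambda>i j. if i = j then x - 0 else if False then real ([m] ! j) else 0) *
    (\<Prod>i<length [m]. detI {1..<[m] ! i} (\<lambda>a b. (if a = b then x - 0 else 0) - (Lap t $$ (a, b) - Lap t $$ (0, b))))"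
  proof (rule detI_join[where C="\<lambda>i a b. Lap t $$ (a, b)" and Nv="\<lambda>i. 0" and adj="\<lambda>i j. False"])
    show "0 < [m] ! i" if "i < length [m]" for i using that m by simp
    show "(\<Sum>b<[m] ! i. Lap t $$ (a, b)) = 0" if "i < length [m]" "a < [m] ! i" for i a
      using that rowsum_Lap[OF wf] m_def by simp
    show "Lap t $$ (a, b) = (if bk [m] a = bk [m] b then Lap t $$ (a - off [m] (bk [m] a), b - off [m] (bk [m] a))
          + (if a = b then 0 else 0) else if False then -1 else 0)"
      if "a < sum_list [m]" "b < sum_list [m]" for a b
      using that bk0 by simp
  qed
  hence "detI {0..<m} (\<lambda>a b. (if a = b then x else 0) - Lap t $$ (a, b)) =
    x * detI {1..<m} (\<lambda>a b. (if a = b then x else 0) - (Lap t $$ (a, b) - Lap t $$ (0, b)))"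
    by (simp add: detI_sing cong: if_cong)
  thus ?thesis
    unfolding poly_char_detI[OF Lap_carrier] poly_Dp m_def[symmetric] .
qed

lemma Lmat_carrier: "Lmat t \<in> carrier_mat (length (children t)) (length (children t))"
  by (simp add: Lmat_def Let_def)

lemma Lmat_entry:
  assumes "i < length ts" "j < length ts"
  shows "Lmat (Node ts g) $$ (i, j) = (if i = j then ext_val (Node ts g) i
     else if {i, j} \<in> g then - sqrt (real (nleaves (ts ! i)) * real (nleaves (ts ! j))) else 0)"
  using assms by (simp add: Lmat_def ext_val_def Let_def)

lemma node_eval:
  assumes wf: "wf_stree (Node ts g)"
  shows "poly (char_poly (Lap (Node ts g))) x = poly (char_poly (Lmat (Node ts g))) x *
    (\<Prod>i<length ts. poly (char_poly (Dp (ts ! i))) (x - ext_val (Node ts g) i))"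
proof -
  define ns where "ns = map nleaves ts"
  let ?T = "Node ts g"
  have pos: "0 < ns ! i" if "i < length ns" for i
    using that wf nleaves_pos[of "ts ! i"] ns_def by auto
  have J: "detI {0..<sum_list ns} (\<lambda>a b. (if a = b then x else 0) - Lap ?T $$ (a, b)) =
    detI {0..<length ns} (\<lambda>i j. if i = j then x - ext_val ?T i else if {i, j} \<in> g then real (ns ! j) else 0) *
    (\<Prod>i<length ns. detI {1..<ns ! i} (\<lambda>a b. (if a = b then x - ext_val ?T i else 0) -
       (Lap (ts ! i) $$ (a, b) - Lap (ts ! i) $$ (0, b))))"
  proof (rule detI_join[where C="\<lambda>i a b. Lap (ts ! i) $$ (a, b)"])
    show "0 < ns ! i" if "i < length ns" for i using pos that .
    show "(\<Sum>b<ns ! i. Lap (ts ! i) $$ (a, b)) = 0" if "i < length ns" "a < ns ! i" for i a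
      using that rowsum_Lap[of "ts ! i" a] wf ns_def by auto
    fix a b assume ab: "a < sum_list ns" "b < sum_list ns"
    have "bk ns a < length ts" using bk_prop(1)[OF ab(1)] ns_def by simp
    hence nb: "ns ! bk ns a = nleaves (ts ! bk ns a)" using ns_def by simp
    show "Lap ?T $$ (a, b) = (if bk ns a = bk ns b then Lap (ts ! bk ns a) $$ (a - off ns (bk ns a), b - off ns (bk ns a))
          + (if a = b then ext_val ?T (bk ns a) else 0)
       else if {bk ns a, bk ns b} \<in> g then -1 else 0)"
    proof -
      have lp: "laplacian (sum_list ns) (compose ?T) $$ (a, b) =
        (if bk ns a = bk ns b then
           laplacian (ns ! bk ns a) (compose (ts ! bk ns a)) $$ (a - off ns (bk ns a), b - off ns (bk ns a))
           + (if a = b then ext_val ?T (bk ns a) else 0)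
         else if {bk ns a, bk ns b} \<in> g then -1 else 0)"
        using lap_node[OF wf ab[unfolded ns_def]] unfolding ns_def .
      have e1: "Lap ?T = laplacian (sum_list ns) (compose ?T)"
        unfolding Lap_def ns_def by (simp del: compose.simps)
      have e2: "Lap (ts ! bk ns a) = laplacian (ns ! bk ns a) (compose (ts ! bk ns a))"
        unfolding Lap_def nb ..
      show ?thesis unfolding e1 e2 by (rule lp)
    qed
  qed
  have L: "poly (char_poly (Lap ?T)) x = detI {0..<sum_list ns} (\<lambda>a b. (if a = b then x else 0) - Lap ?T $$ (a, b))"
    using poly_char_detI[OF Lap_carrier] ns_def by simp
  have P: "(\<Prod>i<length ns. detI {1..<ns ! i} (\<lambda>a b. (if a = b then x - ext_val ?T i else 0) -
       (Lap (ts ! i) $$ (a, b) - Lap (ts ! i) $$ (0, b)))) =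
       (\<Prod>i<length ts. poly (char_poly (Dp (ts ! i))) (x - ext_val ?T i))"
    unfolding poly_Dp ns_def by (rule prod.cong) (auto cong: if_cong)
  have A: "detI {0..<length ns} (\<lambda>i j. if i = j then x - ext_val ?T i else if {i, j} \<in> g then real (ns ! j) else 0)
      = poly (char_poly (Lmat ?T)) x"
  proof -
    define s where "s i = sqrt (real (ns ! i))" for i
    have s0: "s i \<noteq> 0" if "i \<in> {0..<length ns}" for i using pos[of i] that s_def by auto
    have "poly (char_poly (Lmat ?T)) x = detI {0..<length ns} (\<lambda>i j. (if i = j then x else 0) - Lmat ?T $$ (i, j))"
      using poly_char_detI[OF Lmat_carrier] ns_def by simp
    also have "\<dots> = detI {0..<length ns} (\<lambda>i j. ((if i = j then x else 0) - Lmat ?T $$ (i, j)) * s j / s i)"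
      by (rule detI_scale[symmetric]) (use s0 in auto)
    also have "\<dots> = detI {0..<length ns} (\<lambda>i j. if i = j then x - ext_val ?T i else if {i, j} \<in> g then real (ns ! j) else 0)"
    proof (rule detI_cong)
      fix i j assume ij: "i \<in> {0..<length ns}" "j \<in> {0..<length ns}"
      hence ij': "i < length ts" "j < length ts" using ns_def by auto
      have nn: "ns ! i = nleaves (ts ! i)" "ns ! j = nleaves (ts ! j)" using ij' ns_def by auto
      have sq: "sqrt (real (ns ! i) * real (ns ! j)) * s j / s i = real (ns ! j)"
        using s0[OF ij(1)] unfolding s_def by (simp add: real_sqrt_mult)
      show "((if i = j then x else 0) - Lmat ?T $$ (i, j)) * s j / s i =
          (if i = j then x - ext_val ?T i else if {i, j} \<in> g then real (ns ! j) else 0)"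
        using s0[OF ij(1)] sq unfolding Lmat_entry[OF ij'] nn[symmetric] by auto
    qed
    finally show ?thesis by simp
  qed
  show ?thesis using J L P A by simp
qed

lemma node_poly:
  assumes wf: "wf_stree (Node ts g)"
  shows "char_poly (Lap (Node ts g)) = char_poly (Lmat (Node ts g)) *
    (\<Prod>i<length ts. pcompose (char_poly (Dp (ts ! i))) [:- ext_val (Node ts g) i, 1:])"
  unfolding poly_eq_poly_eq_iff[symmetric]
  by (rule ext) (simp add: node_eval[OF wf] poly_prod poly_pcompose)

lemma leaf_poly:
  assumes wf: "wf_stree t"
  shows "char_poly (Lap t) = [:0, 1:] * char_poly (Dp t)"
  unfolding poly_eq_poly_eq_iff[symmetric]
  by (rule ext) (simp add: single_block[OF wf])

lemma pcompose_power_left: "pcompose (r ^ m) q = (pcompose r q) ^ m"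
  for r q :: "real poly"
  by (induct m) (simp_all add: pcompose_mult pcompose_1)

lemma shift_ne0: "p \<noteq> 0 \<Longrightarrow> pcompose p [:- c, 1:] \<noteq> (0 :: real poly)"
  using pcompose_eq_0[of p "[:- c, 1:]"] by auto

lemma order_shift_le:
  fixes p :: "real poly"
  assumes p: "p \<noteq> 0"
  shows "order (a - c) p \<le> order a (pcompose p [:- c, 1:])"
proof -
  let ?m = "order (a - c) p"
  have "[:- (a - c), 1:] ^ ?m dvd p" by (rule order_1)
  then obtain r where r: "p = [:- (a - c), 1:] ^ ?m * r" by (elim dvdE)
  have "pcompose p [:- c, 1:] = (pcompose [:- (a - c), 1:] [:- c, 1:]) ^ ?m * pcompose r [:- c, 1:]"
    by (subst r) (simp only: pcompose_mult pcompose_power_left)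
  also have "pcompose [:- (a - c), 1:] [:- c, 1:] = [:- a, 1:]"
    by (simp add: pcompose_pCons)
  finally have "[:- a, 1:] ^ ?m dvd pcompose p [:- c, 1:]" by simp
  thus ?thesis using shift_ne0[OF p] by (simp add: order_divides)
qed

lemma order_shift:
  fixes p :: "real poly"
  assumes p: "p \<noteq> 0"
  shows "order a (pcompose p [:- c, 1:]) = order (a - c) p"
proof (rule antisym)
  show "order (a - c) p \<le> order a (pcompose p [:- c, 1:])" by (rule order_shift_le[OF p])
  have hback: "pcompose (pcompose p [:- c, 1:]) [:- (- c), 1:] = p"
    by (simp add: pcompose_assoc[symmetric] pcompose_pCons)
  have "order (a - c - (- c)) (pcompose p [:- c, 1:]) \<le> order (a - c) (pcompose (pcompose p [:- c, 1:]) [:- (- c), 1:])"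
    by (rule order_shift_le[OF shift_ne0[OF p]])
  thus "order a (pcompose p [:- c, 1:]) \<le> order (a - c) p" unfolding hback by simp
qed

lemma proots_shift:
  fixes p :: "real poly"
  assumes p: "p \<noteq> 0"
  shows "proots (pcompose p [:- c, 1:]) = image_mset (\<lambda>x. x + c) (proots p)"
proof (rule multiset_eqI)
  fix a
  have "count (image_mset (\<lambda>x. x + c) (proots p)) a = (\<Sum>x | x \<in># proots p \<and> a = x + c. count (proots p) x)"
    by (rule count_image_mset')
  also have "{x. x \<in># proots p \<and> a = x + c} = (if a - c \<in># proots p then {a - c} else {})" by auto
  also have "(\<Sum>x\<in>(if a - c \<in># proots p then {a - c} else {}). count (proots p) x) = count (proots p) (a - c)"
    by (auto simp: not_in_iff)
  finally show "count (proots (pcompose p [:- c, 1:])) a = count (image_mset (\<lambda>x. x + c) (proots p)) a"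
    using p shift_ne0[OF p] by (simp add: order_shift)
qed

lemma char_poly_ne0: "A \<in> carrier_mat n n \<Longrightarrow> char_poly A \<noteq> (0 :: real poly)"
  using degree_monic_char_poly[of A n] by auto

lemma spec_Dp: "wf_stree t \<Longrightarrow> spec (Dp t) = spec (Lap t) - {#0#}"
proof -
  assume wf: "wf_stree t"
  have "proots ([:0, 1:] * char_poly (Dp t)) = proots [:0, 1:] + proots (char_poly (Dp t))"
    by (rule proots_mult) (use char_poly_ne0[OF Dp_carrier] in auto)
  thus ?thesis unfolding spec_def leaf_poly[OF wf] by simp
qed

lemma spec_node:
  assumes wf: "wf_stree (Node ts g)"
  shows "spec (Lap (Node ts g)) = spec (Lmat (Node ts g)) +
    (\<Sum>i<length ts. image_mset (\<lambda>y. y + ext_val (Node ts g) i) (spec (Dp (ts ! i))))"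
  unfolding spec_def node_poly[OF wf]
  using char_poly_ne0[OF Lmat_carrier] char_poly_ne0[OF Dp_carrier] shift_ne0
  by (simp add: proots_mult proots_prod proots_shift)

lemma zero_in_spec_Lmat:
  assumes wf: "wf_stree (Node ts g)"
  shows "0 \<in># spec (Lmat (Node ts g))"
proof -
  let ?T = "Node ts g"
  let ?k = "length ts"
  define v where "v = vec ?k (\<lambda>i. sqrt (real (nleaves (ts ! i))))"
  have "2 \<le> ?k" using wf by simp
  hence k: "0 < ?k" by linarith
  have pos: "0 < nleaves (ts ! i)" if "i < ?k" for i using that wf nleaves_pos[of "ts ! i"] by auto
  have v: "v \<in> carrier_vec ?k" unfolding v_def by simp
  have v0: "v \<noteq> 0\<^sub>v ?k"
  proof
    assume "v = 0\<^sub>v ?k"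
    hence "v $ 0 = 0" using k by simp
    thus False using pos[OF k] k unfolding v_def by simp
  qed
  have Av: "Lmat ?T *\<^sub>v v = 0 \<cdot>\<^sub>v v"
  proof (rule eq_vecI)
    fix i assume "i < dim_vec (0 \<cdot>\<^sub>v v)"
    hence i: "i < ?k" using v by simp
    define n where "n j = real (nleaves (ts ! j))" for j
    have "(Lmat ?T *\<^sub>v v) $ i = (\<Sum>j<?k. Lmat ?T $$ (i, j) * sqrt (n j))"
      using i Lmat_carrier[of ?T] by (simp add: v_def scalar_prod_def n_def atLeast0LessThan)
    also have "\<dots> = (\<Sum>j<?k. (if j = i then ext_val ?T i * sqrt (n i) else 0)
        - (if {j, i} \<in> g then sqrt (n i) * n j else 0))"
    proof (rule sum.cong[OF refl])
      fix j assume "j \<in> {..<?k}"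
      hence j: "j < ?k" by simp
      have g: "simple_graph (length ts) g" using wf by simp
      have "{i, i} \<notin> g" using g unfolding simple_graph_def by (metis doubleton_eq_iff)
      moreover have "sqrt (n i * n j) * sqrt (n j) = sqrt (n i) * n j"
        using pos[OF j] by (simp add: real_sqrt_mult n_def)
      ultimately show "Lmat ?T $$ (i, j) * sqrt (n j) = (if j = i then ext_val ?T i * sqrt (n i) else 0)
        - (if {j, i} \<in> g then sqrt (n i) * n j else 0)"
        unfolding Lmat_entry[OF i j] n_def by (auto simp: insert_commute)
    qed
    also have "\<dots> = ext_val ?T i * sqrt (n i) - sqrt (n i) * (\<Sum>j<?k. if {j, i} \<in> g then n j else 0)"
    proof -
      have "(\<Sum>j<?k. (if j = i then ext_val ?T i * sqrt (n i) else 0)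
        - (if {j, i} \<in> g then sqrt (n i) * n j else 0)) = (\<Sum>j<?k. (if j = i then ext_val ?T i * sqrt (n i) else 0))
        - (\<Sum>j<?k. (if {j, i} \<in> g then sqrt (n i) * n j else 0))"
        by (rule sum_subtractf)
      also have "(\<Sum>j<?k. (if j = i then ext_val ?T i * sqrt (n i) else 0)) = ext_val ?T i * sqrt (n i)"
        using i by simp
      also have "(\<Sum>j<?k. (if {j, i} \<in> g then sqrt (n i) * n j else 0)) = sqrt (n i) * (\<Sum>j<?k. if {j, i} \<in> g then n j else 0)"
        by (simp add: sum_distrib_left if_distrib cong: if_cong)
      finally show ?thesis .
    qed
    also have "(\<Sum>j<?k. if {j, i} \<in> g then n j else 0) = ext_val ?T i"
    proof -
      have "ext_val ?T i = (\<Sum>x\<in>{x\<in>{..<?k}. {x, i} \<in> g}. n x)"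
        unfolding ext_val_def n_def by simp
      also have "\<dots> = (\<Sum>j<?k. if {j, i} \<in> g then n j else 0)"
        by (rule sum.inter_filter) simp
      finally show ?thesis by simp
    qed
    finally show "(Lmat ?T *\<^sub>v v) $ i = (0 \<cdot>\<^sub>v v) $ i" using i v by simp
  qed (use v Lmat_carrier[of ?T] in simp)
  have "eigenvalue (Lmat ?T) 0"
    unfolding eigenvalue_def eigenvector_def using v v0 Av Lmat_carrier[of ?T] by auto
  hence "poly (char_poly (Lmat ?T)) 0 = 0" using eigenvalue_root_char_poly[OF Lmat_carrier] by simp
  thus ?thesis unfolding spec_def using char_poly_ne0[OF Lmat_carrier] by simp
qed

lemma image_mset_sum_set:
  "image_mset f (\<Sum>x\<in>A. g x) = (\<Sum>x\<in>A. image_mset f (g x))"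
  by (induction A rule: infinite_finite_induct) auto

lemma image_shift_op: "image_mset (\<lambda>y. y + c) (shift_op s X) = shift_op (s + c) X"
  unfolding shift_op_def by (simp add: image_mset.compositionality comp_def add.assoc)

lemma positions_Node:
  "positions (Node ts g) = insert [] (\<Union>i<length ts. (#) i ` positions (ts ! i))"
  by (simp add: zip_upt_set)

lemma finite_positions: "finite (positions t)"
proof (induction t)
  case Leaf thus ?case by simp
next
  case (Node ts g)
  thus ?case unfolding positions_Node by auto
qed

lemma Iv_Leaf: "internal_vertices Leaf = {}"
  by (simp add: internal_vertices_def)

lemma Iv_root: "is_node t \<Longrightarrow> [] \<in> internal_vertices t"
  by (cases t) (auto simp: internal_vertices_def)

lemma Iv_Node:
  "internal_vertices (Node ts g) - {[]} = (\<Union>i<length ts. (#) i ` internal_vertices (ts ! i))"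
  unfolding internal_vertices_def positions_Node by auto

lemma N_path_Cons:
  assumes "i < length ts"
  shows "N_path (Node ts g) (i # q) = ext_val (Node ts g) i + N_path (ts ! i) q"
proof -
  have "N_path (Node ts g) (i # q) = (\<Sum>m<Suc (length q). ext_val (subtree (Node ts g) (take m (i # q))) ((i # q) ! m))"
    unfolding N_path_def by simp
  also have "\<dots> = ext_val (subtree (Node ts g) (take 0 (i # q))) ((i # q) ! 0) +
      (\<Sum>m<length q. ext_val (subtree (Node ts g) (take (Suc m) (i # q))) ((i # q) ! Suc m))"
    by (rule sum.lessThan_Suc_shift)
  also have "\<dots> = ext_val (Node ts g) i + N_path (ts ! i) q"
    using assms by (simp add: N_path_def)
  finally show ?thesis .
qed

lemma spec_Dp_Leaf: "spec (Dp Leaf) = {#}"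
proof -
  have "Dp Leaf \<in> carrier_mat 0 0" using Dp_carrier[of Leaf] by simp
  hence "char_poly (Dp Leaf) = 1" unfolding char_poly_def
    using char_poly_matrix_closed det_dim_zero by blast
  thus ?thesis by (simp add: spec_def)
qed

lemma diff_zero_split: "0 \<in># B \<Longrightarrow> (A + B) - {#0#} = A + (B - {#0#})"
  by (metis add_mset_add_single add_mset_remove_trivial insert_DiffM union_mset_add_mset_right)

lemma main_lemma:
  "wf_stree t \<Longrightarrow> is_node t \<Longrightarrow> spec (Lap t) =
    (\<Sum>p\<in>internal_vertices t - {[]}. shift_op (N_path t p) (spec (Lmat (subtree t p)))) + spec (Lmat t)"
proof (induction t)
  case Leaf thus ?case by simp
next
  case (Node ts g)
  let ?T = "Node ts g"
  let ?F = "\<lambda>p. shift_op (N_path ?T p) (spec (Lmat (subtree ?T p)))"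
  have child: "image_mset (\<lambda>y. y + ext_val ?T i) (spec (Dp (ts ! i))) =
      (\<Sum>q\<in>internal_vertices (ts ! i). ?F (i # q))" if i: "i < length ts" for i
  proof (cases "ts ! i")
    case Leaf
    thus ?thesis by (simp add: spec_Dp_Leaf Iv_Leaf)
  next
    case (Node ts' g')
    let ?t = "ts ! i"
    have wft: "wf_stree ?t" using Node.prems i by auto
    have IH: "spec (Lap ?t) = (\<Sum>q\<in>internal_vertices ?t - {[]}. shift_op (N_path ?t q) (spec (Lmat (subtree ?t q))))
        + spec (Lmat ?t)"
      using Node.IH[OF nth_mem[OF i] wft] \<open>?t = Node ts' g'\<close> by simp
    have z: "0 \<in># spec (Lmat ?t)" using zero_in_spec_Lmat[of ts' g'] wft Node by auto
    have Fq: "?F (i # q) = shift_op (N_path ?t q + ext_val ?T i) (spec (Lmat (subtree ?t q)))" for q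
      using N_path_Cons[OF i, of g q] i by (simp add: add.commute)
    have "image_mset (\<lambda>y. y + ext_val ?T i) (spec (Dp ?t)) =
        image_mset (\<lambda>y. y + ext_val ?T i) ((\<Sum>q\<in>internal_vertices ?t - {[]}. shift_op (N_path ?t q) (spec (Lmat (subtree ?t q))))
        + (spec (Lmat ?t) - {#0#}))"
      unfolding spec_Dp[OF wft] IH using diff_zero_split[OF z] by simp
    also have "\<dots> = (\<Sum>q\<in>internal_vertices ?t - {[]}. shift_op (N_path ?t q + ext_val ?T i) (spec (Lmat (subtree ?t q))))
        + shift_op (ext_val ?T i) (spec (Lmat ?t))"
      by (simp only: image_mset_union image_mset_sum_set image_shift_op) (simp add: shift_op_def)
    also have "\<dots> = (\<Sum>q\<in>internal_vertices ?t - {[]}. ?F (i # q)) + shift_op (ext_val ?T i) (spec (Lmat ?t))"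
      by (simp only: Fq)
    also have "shift_op (ext_val ?T i) (spec (Lmat ?t)) = ?F (i # [])"
      using Fq[of "[]"] by (simp add: N_path_def)
    also have "(\<Sum>q\<in>internal_vertices ?t - {[]}. ?F (i # q)) + ?F (i # []) = (\<Sum>q\<in>internal_vertices ?t. ?F (i # q))"
    proof -
      have "[] \<in> internal_vertices ?t" using Iv_root Node by simp
      moreover have "finite (internal_vertices ?t)"
        using finite_positions[of ?t] unfolding internal_vertices_def by simp
      ultimately show ?thesis by (simp add: sum.remove add.commute)
    qed
    finally show ?thesis .
  qed
  have "spec (Lap ?T) = spec (Lmat ?T) + (\<Sum>i<length ts. \<Sum>q\<in>internal_vertices (ts ! i). ?F (i # q))"
    unfolding spec_node[OF Node.prems(1)] using child by simp
  also have "(\<Sum>i<length ts. \<Sum>q\<in>internal_vertices (ts ! i). ?F (i # q)) = (\<Sum>p\<in>internal_vertices ?T - {[]}. ?F p)"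
  proof -
    have fin: "finite (internal_vertices (ts ! i))" for i
      using finite_positions[of "ts ! i"] unfolding internal_vertices_def by simp
    have "(\<Sum>p\<in>internal_vertices ?T - {[]}. ?F p) = (\<Sum>i<length ts. \<Sum>p\<in>(#) i ` internal_vertices (ts ! i). ?F p)"
      unfolding Iv_Node by (rule sum.UNION_disjoint) (use fin in auto)
    also have "\<dots> = (\<Sum>i<length ts. \<Sum>q\<in>internal_vertices (ts ! i). ?F (i # q))"
      by (rule sum.cong[OF refl], rule sum.reindex_cong[where l="(#) _"]) (auto simp: inj_on_def)
    finally show ?thesis by simp
  qed
  finally show ?case by (simp add: add.commute)
qed

theorem mainTheorem3:
  fixes T :: stree and n :: nat
  assumes "wf_stree T" and "conn_stree T"
    and "nleaves T = n" and "n \<ge> 2"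
  shows "spec (laplacian n (compose T)) =
    (\<Sum>p\<in>internal_vertices T - {[]}. shift_op (N_path T p) (spec (Lmat (subtree T p))))
    + spec (Lmat T)"
proof -
  have "is_node T" using assms by (cases T) auto
  thus ?thesis using main_lemma[OF assms(1)] assms(3) by (simp add: Lap_def)
qed


end
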